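(* Let $G=\vec{C}_5^{1,2}$, fix $n\ge 2$ and $a\in\mathbb Z_5$. For a word $w=(\varepsilon_1,\dots,\varepsilon_n)\in\{1,2\}^n$ let $e_w=e_{a,\,a+\varepsilon_1,\,a+\varepsilon_1+\varepsilon_2,\,\ldots,\,a+\varepsilon_1+\cdots+\varepsilon_n}$ (mod $5$); these are exactly the allowed $n$-paths starting at $a$, and they span $A_n(a)$. Let $\Omega_n(a):=\Omega_n(G)\cap A_n(a)$. If $P=\sum_w c_w e_w\in\Omega_n(a)$, then: (1) $c_w=0$ whenever $w$ contains two consecutive letters $22$; (2) whenever $w$ and $w'$ differ only by exchanging an adjacent pair $12\leftrightarrow 21$ at positions $j,j+1$ (all other letters equal), $c_w+c_{w'}=0$; (3) consequently $c_w=0$ for every $w$ containing at least two letters $2$, and the coefficients of all words containing exactly one letter $2$ are determined by a single scalar. In particular $\dim_{\mathbb K}\Omega_n(a)\le 2$.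
   Context: GLMY path complex. Let $\mathbb K$ be a field of characteristic $0$ and $V$ a finite set. An elementary $n$-path is a sequence $(v_0,\dots,v_n)$, written $e_{v_0\cdots v_n}$; $\partial e_{v_0\cdots v_n}=\sum_{j=0}^n(-1)^j e_{v_0\cdots\widehat{v_j}\cdots v_n}$. Regular paths: elementary paths with $v_{k-1}=v_k$ for some $k$ are set to $0$. For a loopless digraph $G=(V,E)$, $A_n(G)$ is the span of elementary paths with $(v_k\to v_{k+1})\in E$ for all $k$; $\Omega_0=A_0$, $\Omega_1=A_1$, $\Omega_n(G)=\{u\in A_n(G):\partial u\in A_{n-1}(G)\}$ for $n\ge2$. The circulant digraph $\vec C_5^{1,2}$ has vertex set $\mathbb Z_5$ and arrows $a\to a+1$, $a\to a+2$ for all $a$. *)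

theory Defs
  imports Main
begin

text \<open>Elementary paths are vertex lists; an elementary n-path has length n+1.
  A chain is a coefficient function on vertex lists (finitely supported, since
  the vertex set is finite and the degree is fixed).\<close>

type_synonym vpath = "nat list"

definition regular_path :: "vpath \<Rightarrow> bool" where
  "regular_path p \<longleftrightarrow> (\<forall>i. Suc i < length p \<longrightarrow> p ! i \<noteq> p ! Suc i)"

definition allowed_path :: "nat set \<Rightarrow> (nat \<Rightarrow> nat \<Rightarrow> bool) \<Rightarrow> vpath \<Rightarrow> bool" where
  "allowed_path V E p \<longleftrightarrow> set p \<subseteq> V \<and> (\<forall>i. Suc i < length p \<longrightarrow> E (p ! i) (p ! Suc i))"

text \<open>Boundary in the regular path complex on vertex set V: for a chain u supported
  on regular paths, the coefficient of q in the boundary of u is the sum over all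
  ways of writing q as p with the j-th vertex deleted, of (-1)^j u(p);
  non-regular q are set to 0.\<close>
definition bd :: "nat set \<Rightarrow> (vpath \<Rightarrow> 'k::field) \<Rightarrow> vpath \<Rightarrow> 'k" where
  "bd V u q = (if regular_path q then
      (\<Sum>j\<in>{0..length q}. \<Sum>v\<in>V. (-1) ^ j * u (take j q @ v # drop j q)) else 0)"

definition A_space :: "nat set \<Rightarrow> (nat \<Rightarrow> nat \<Rightarrow> bool) \<Rightarrow> nat \<Rightarrow> (vpath \<Rightarrow> 'k::field) set" where
  "A_space V E n = {u. \<forall>p. u p \<noteq> 0 \<longrightarrow> allowed_path V E p \<and> length p = Suc n}"

definition Omega :: "nat set \<Rightarrow> (nat \<Rightarrow> nat \<Rightarrow> bool) \<Rightarrow> nat \<Rightarrow> (vpath \<Rightarrow> 'k::field) set" where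
  "Omega V E n = (if n < 2 then A_space V E n
                  else {u \<in> A_space V E n. bd V u \<in> A_space V E (n - 1)})"

definition C5V :: "nat set" where "C5V = {0..<5}"
definition C5E :: "nat \<Rightarrow> nat \<Rightarrow> bool" where
  "C5E x y \<longleftrightarrow> x < 5 \<and> (y = (x + 1) mod 5 \<or> y = (x + 2) mod 5)"

definition Omega_at :: "nat \<Rightarrow> nat \<Rightarrow> (vpath \<Rightarrow> 'k::field) set" where
  "Omega_at n a = {u \<in> Omega C5V C5E n. \<forall>p. u p \<noteq> 0 \<longrightarrow> hd p = a}"

fun epath :: "nat \<Rightarrow> nat list \<Rightarrow> vpath" where
  "epath a [] = [a]"
| "epath a (e # w) = a # epath ((a + e) mod 5) w"

definition words :: "nat \<Rightarrow> nat list set" where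
  "words n = {w. length w = n \<and> set w \<subseteq> {1, 2}}"

definition count2 :: "nat list \<Rightarrow> nat" where
  "count2 w = length (filter (\<lambda>x. x = 2) w)"

end

theory Submission
  imports Defs
begin

lemma succ_nth: "successively R p \<longleftrightarrow> (\<forall>i. Suc i < length p \<longrightarrow> R (p!i) (p!Suc i))"
proof (induction R p rule: successively.induct)
  case (3 R x y xs)
  show ?case
  proof
    assume h: "successively R (x # y # xs)"
    show "\<forall>i. Suc i < length (x # y # xs) \<longrightarrow> R ((x # y # xs) ! i) ((x # y # xs) ! Suc i)"
    proof (intro allI impI)
      fix i assume "Suc i < length (x # y # xs)"
      then show "R ((x # y # xs) ! i) ((x # y # xs) ! Suc i)"
        using h 3 by (cases i) auto
    qed
  next
    assume h: "\<forall>i. Suc i < length (x # y # xs) \<longrightarrow> R ((x # y # xs) ! i) ((x # y # xs) ! Suc i)"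
    have "R x y" using h[rule_format, of 0] by simp
    moreover have "successively R (y#xs)" unfolding 3
    proof (intro allI impI)
      fix i assume "Suc i < length (y # xs)"
      then show "R ((y # xs) ! i) ((y # xs) ! Suc i)" using h[rule_format, of "Suc i"] by simp
    qed
    ultimately show "successively R (x # y # xs)" by simp
  qed
qed auto

lemma reg_iff: "regular_path p \<longleftrightarrow> successively (\<noteq>) p"
  unfolding regular_path_def succ_nth by simp

lemma allowed_iff: "allowed_path V E p \<longleftrightarrow> set p \<subseteq> V \<and> successively E p"
  unfolding allowed_path_def succ_nth by simp

lemma succ_mid: "successively E (A @ x # y # R) \<Longrightarrow> E x y"
  by (simp add: successively_append_iff)

lemma C5E_neq: "C5E x y \<Longrightarrow> x \<noteq> y"
  unfolding C5E_def by (auto; presburger)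

lemma key:
  fixes P :: "vpath \<Rightarrow> 'k::field"
  assumes PA: "\<And>p. P p \<noteq> 0 \<Longrightarrow> successively C5E p"
    and bdA: "\<And>q. bd C5V P q \<noteq> 0 \<Longrightarrow> successively C5E q"
    and reg: "successively (\<noteq>) (L @ x # y # R)"
    and nE: "\<not> C5E x y"
  shows "(\<Sum>v\<in>{0..<5}. P (L @ x # v # y # R)) = 0"
proof -
  define q where "q = L @ x # y # R"
  define f where "f = (\<lambda>j. \<Sum>v\<in>C5V. (-1) ^ j * P (take j q @ v # drop j q))"
  have "bd C5V P q = 0" using bdA[of q] nE unfolding q_def by (auto dest: succ_mid)
  hence s0: "sum f {0..length q} = 0" using reg unfolding bd_def f_def q_def reg_iff by simp
  have z: "f j = 0" if "j \<in> {0..length q} - {Suc (length L)}" for j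
  proof -
    have "P (take j q @ v # drop j q) = 0" for v
    proof (cases "j \<le> length L")
      case True
      have "take j q @ v # drop j q = (take j L @ v # drop j L) @ x # y # R"
        using True unfolding q_def by simp
      then show ?thesis using PA[of "take j q @ v # drop j q"] nE succ_mid[of C5E "take j L @ v # drop j L" x y R] by auto
    next
      case False
      have "j \<ge> length L + 2" using False that by auto
      then obtain k where k: "j = length L + Suc (Suc k)" by (intro that[of "j - length L - 2"]) simp
      have "take j q @ v # drop j q = L @ x # y # (take k R @ v # drop k R)"
        unfolding q_def k by simp
      then show ?thesis using PA[of "take j q @ v # drop j q"] nE by (auto dest: succ_mid)
    qed
    then show ?thesis unfolding f_def by simp
  qed
  have "sum f {0..length q} = f (Suc (length L)) + sum f ({0..length q} - {Suc (length L)})"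
    by (rule sum.remove) (auto simp: q_def)
  also have "sum f ({0..length q} - {Suc (length L)}) = 0" using z by (intro sum.neutral) blast
  finally have "f (Suc (length L)) = 0" using s0 by simp
  moreover have "take (Suc (length L)) q = L @ [x]" "drop (Suc (length L)) q = y # R"
    unfolding q_def by simp_all
  ultimately have "(-1) ^ Suc (length L) * (\<Sum>v\<in>C5V. P (L @ x # v # y # R)) = (0::'k)"
    unfolding f_def by (simp add: sum_distrib_left)
  then show ?thesis unfolding C5V_def by simp
qed

lemma epath_Cons: "epath a w = a # tl (epath a w)"
  by (cases w) auto

lemma epath_ne: "epath a w \<noteq> []"
  by (cases w) auto

lemma epath_ne': "[] \<noteq> epath a w"
  by (cases w) auto

lemma epath_length: "length (epath a w) = Suc (length w)"
  by (induction w arbitrary: a) auto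

lemma epath_append: "epath a (u @ s) = butlast (epath a u) @ epath (last (epath a u)) s"
  by (induction u arbitrary: a) (auto simp: epath_ne)

lemma epath_set: "a < 5 \<Longrightarrow> set (epath a w) \<subseteq> {0..<5}"
  by (induction w arbitrary: a) auto

lemma epath_succ: "a < 5 \<Longrightarrow> set w \<subseteq> {1,2} \<Longrightarrow> successively C5E (epath a w)"
proof (induction w arbitrary: a)
  case (Cons e w)
  have "successively C5E (epath ((a + e) mod 5) w)" using Cons by auto
  moreover have "C5E a ((a + e) mod 5)" using Cons.prems by (auto simp: C5E_def)
  moreover obtain rest where "epath ((a + e) mod 5) w = (a + e) mod 5 # rest"
    using epath_Cons by blast
  ultimately show ?case by simp
qed simp

lemma epath_split: "epath a (u @ e1 # e2 # t) =
   butlast (epath a u) @ last (epath a u) # (last (epath a u) + e1) mod 5 #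
   ((last (epath a u) + e1) mod 5 + e2) mod 5 # tl (epath (((last (epath a u) + e1) mod 5 + e2) mod 5) t)"
  by (simp add: epath_append, subst epath_Cons, simp)

lemma split_word: "Suc j < length w \<Longrightarrow> w = take j w @ w!j # w!Suc j # drop (Suc (Suc j)) w"
  by (simp add: Cons_nth_drop_Suc)

lemma reg_del: "successively (\<noteq>) (L @ x # m # y # R) \<Longrightarrow> x \<noteq> y \<Longrightarrow> successively (\<noteq>) (L @ x # y # R)"
  by (auto simp: successively_append_iff)

lemma sum5: "(\<Sum>v\<in>{0..<5::nat}. f v) = f 0 + (f 1 + (f 2 + (f 3 + (f 4::'k::comm_monoid_add))))"
proof -
  have "{0..<5::nat} = {0,1,2,3,4}" by auto
  then show ?thesis by simp
qed

lemma zero_bad: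
  assumes PA: "\<And>p. P p \<noteq> 0 \<Longrightarrow> successively C5E p" and "\<not> (C5E x v \<and> C5E v y)"
  shows "P (L @ x # v # y # R) = 0"
  using PA[of "L @ x # v # y # R"] assms(2) by (auto simp: successively_append_iff)

lemma last_lt5: "a < 5 \<Longrightarrow> last (epath a u) < 5"
  using epath_set[of a u] epath_ne[of a u] last_in_set by fastforce

lemma x5_cases: "(x::nat) < 5 \<Longrightarrow> x = 0 \<or> x = 1 \<or> x = 2 \<or> x = 3 \<or> x = 4"
  by auto

lemma part1:
  fixes P :: "vpath \<Rightarrow> 'k::field"
  assumes PA: "\<And>p. P p \<noteq> 0 \<Longrightarrow> successively C5E p"
    and bdA: "\<And>q. bd C5V P q \<noteq> 0 \<Longrightarrow> successively C5E q"
    and a: "a < 5" and w: "set (u @ 2 # 2 # t) \<subseteq> {1,2}"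
  shows "P (epath a (u @ 2 # 2 # t)) = 0"
proof -
  define x where "x = last (epath a u)"
  define L where "L = butlast (epath a u)"
  define R where "R = tl (epath (((x + 2) mod 5 + 2) mod 5) t)"
  have x5: "x < 5" unfolding x_def using a by (rule last_lt5)
  have ep: "epath a (u @ 2 # 2 # t) = L @ x # (x + 2) mod 5 # ((x + 2) mod 5 + 2) mod 5 # R"
    unfolding L_def x_def R_def by (rule epath_split)
  have "successively C5E (epath a (u @ 2 # 2 # t))" using a w by (rule epath_succ)
  hence "successively (\<noteq>) (epath a (u @ 2 # 2 # t))" by (rule successively_mono) (rule C5E_neq)
  moreover have xy: "x \<noteq> ((x + 2) mod 5 + 2) mod 5" using x5_cases[OF x5] by auto
  ultimately have reg: "successively (\<noteq>) (L @ x # ((x + 2) mod 5 + 2) mod 5 # R)"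
    unfolding ep by (rule reg_del)
  have nE: "\<not> C5E x (((x + 2) mod 5 + 2) mod 5)" using x5_cases[OF x5] unfolding C5E_def by auto
  have s: "(\<Sum>v\<in>{0..<5}. P (L @ x # v # ((x + 2) mod 5 + 2) mod 5 # R)) = 0"
    by (rule key[OF PA bdA reg nE])
  from x5_cases[OF x5] have "P (L @ x # (x + 2) mod 5 # ((x + 2) mod 5 + 2) mod 5 # R) = 0"
    using s by (elim disjE) (simp_all add: sum5 zero_bad[OF PA] C5E_def numeral_2_eq_2)
  then show ?thesis unfolding ep .
qed

lemma part2:
  fixes P :: "vpath \<Rightarrow> 'k::field"
  assumes PA: "\<And>p. P p \<noteq> 0 \<Longrightarrow> successively C5E p"
    and bdA: "\<And>q. bd C5V P q \<noteq> 0 \<Longrightarrow> successively C5E q"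
    and a: "a < 5" and w: "set (u @ 1 # 2 # t) \<subseteq> {1,2}"
  shows "P (epath a (u @ 1 # 2 # t)) + P (epath a (u @ 2 # 1 # t)) = 0"
proof -
  define x where "x = last (epath a u)"
  define L where "L = butlast (epath a u)"
  define R where "R = tl (epath ((x + 3) mod 5) t)"
  have x5: "x < 5" unfolding x_def using a by (rule last_lt5)
  have e1: "((x + 1) mod 5 + 2) mod 5 = (x + 3) mod 5" "((x + 2) mod 5 + 1) mod 5 = (x + 3) mod 5"
    using x5_cases[OF x5] by auto
  have ep: "epath a (u @ 1 # 2 # t) = L @ x # (x + 1) mod 5 # (x + 3) mod 5 # R"
    unfolding L_def R_def epath_split x_def[symmetric] e1 ..
  have ep2: "epath a (u @ 2 # 1 # t) = L @ x # (x + 2) mod 5 # (x + 3) mod 5 # R"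
    unfolding L_def R_def epath_split x_def[symmetric] e1 ..
  have "successively C5E (epath a (u @ 1 # 2 # t))" using a w by (rule epath_succ)
  hence "successively (\<noteq>) (epath a (u @ 1 # 2 # t))" by (rule successively_mono) (rule C5E_neq)
  moreover have xy: "x \<noteq> (x + 3) mod 5" using x5_cases[OF x5] by auto
  ultimately have reg: "successively (\<noteq>) (L @ x # (x + 3) mod 5 # R)"
    unfolding ep by (rule reg_del)
  have nE: "\<not> C5E x ((x + 3) mod 5)" using x5_cases[OF x5] unfolding C5E_def by auto
  have s: "(\<Sum>v\<in>{0..<5}. P (L @ x # v # (x + 3) mod 5 # R)) = 0"
    by (rule key[OF PA bdA reg nE])
  from x5_cases[OF x5] have "P (L @ x # (x + 1) mod 5 # (x + 3) mod 5 # R) + P (L @ x # (x + 2) mod 5 # (x + 3) mod 5 # R) = 0"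
    using s by (elim disjE) (simp_all add: sum5 zero_bad[OF PA] C5E_def numeral_2_eq_2 add.commute)
  then show ?thesis unfolding ep ep2 .
qed

definition uw :: "nat \<Rightarrow> nat \<Rightarrow> nat list" where
  "uw n i = map (\<lambda>k. if k = i then 2 else 1) [0..<n]"

lemma uw_length[simp]: "length (uw n i) = n" by (simp add: uw_def)
lemma uw_nth[simp]: "k < n \<Longrightarrow> uw n i ! k = (if k = i then 2 else 1)" by (simp add: uw_def)
lemma uw_words: "uw n i \<in> words n" by (auto simp: uw_def words_def)
lemma rep_words: "replicate n 1 \<in> words n" by (auto simp: words_def)

lemma count_card: "count2 w = card {k. k < length w \<and> w ! k = 2}"
  unfolding count2_def by (rule length_filter_conv_card)

lemma words_nth: "w \<in> words n \<Longrightarrow> k < n \<Longrightarrow> w ! k = 1 \<or> w ! k = 2"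
proof -
  assume a1: "w \<in> words n" "k < n"
  hence "w ! k \<in> set w" by (simp add: words_def)
  thus ?thesis using a1 unfolding words_def by blast
qed

lemma count2_ge2:
  assumes "w \<in> words n" "i < n" "k < n" "i \<noteq> k" "w ! i = 2" "w ! k = 2"
  shows "count2 w \<ge> 2"
proof -
  have "{i, k} \<subseteq> {k. k < length w \<and> w ! k = 2}" using assms by (auto simp: words_def)
  hence "card {i, k} \<le> count2 w" unfolding count_card by (rule card_mono[rotated]) simp
  thus ?thesis using assms(4) by simp
qed

lemma count2_uw: "i < n \<Longrightarrow> count2 (uw n i) = 1"
proof -
  assume "i < n"
  hence "{k. k < length (uw n i) \<and> uw n i ! k = 2} = {i}" by (auto split: if_splits)
  thus ?thesis unfolding count_card by simp
qed

lemma count2_rep: "count2 (replicate n 1) = 0" by (simp add: count2_def)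

lemma count2_one:
  assumes w: "w \<in> words n" and c: "count2 w = 1"
  obtains i where "i < n" "w = uw n i"
proof -
  have "{k. k < length w \<and> w ! k = 2} \<noteq> {}" using c unfolding count_card by (intro notI) simp
  then obtain i where i: "i < n" "w ! i = 2" using w by (auto simp: words_def)
  have "w = uw n i"
  proof (rule nth_equalityI)
    show "length w = length (uw n i)" using w by (simp add: words_def)
    fix k assume "k < length w"
    hence k: "k < n" using w by (simp add: words_def)
    show "w ! k = uw n i ! k"
    proof (cases "k = i")
      case True thus ?thesis using i k by simp
    next
      case False
      have "w ! k \<noteq> 2" using count2_ge2[OF w i(1) k] False i c by auto
      thus ?thesis using words_nth[OF w k] k False by auto
    qed
  qed
  thus ?thesis using that i by blast
qed

lemma count2_two:
  assumes w: "w \<in> words n" and c: "count2 w \<ge> 2"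
  obtains i k where "i < k" "k < n" "w ! i = 2" "w ! k = 2"
proof -
  define S where "S = {k. k < length w \<and> w ! k = 2}"
  have fin: "finite S" unfolding S_def by simp
  have cS: "card S \<ge> 2" using c unfolding count_card S_def .
  then obtain i where i: "i \<in> S" by fastforce
  have "card (S - {i}) \<ge> 1" using cS i fin by simp
  then obtain k where k: "k \<in> S - {i}" by (metis card.empty ex_in_conv not_one_le_zero)
  have "i < k \<or> k < i" using k by auto
  thus ?thesis using i k that w unfolding S_def words_def by auto
qed

lemma epath_inj: "set w \<subseteq> {1,2} \<Longrightarrow> set w' \<subseteq> {1,2} \<Longrightarrow> epath a w = epath a w' \<Longrightarrow> w = w'"
proof (induction w arbitrary: w' a)
  case Nil thus ?case by (cases w') (auto simp: epath_ne epath_ne')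
next
  case (Cons e w)
  then obtain e' t where w': "w' = e' # t"
    by (cases w') (auto simp: epath_ne epath_ne')
  have h: "epath ((a + e) mod 5) w = epath ((a + e') mod 5) t" using Cons.prems w' by simp
  have "(a + e) mod 5 = (a + e') mod 5" using arg_cong[OF h, of hd] epath_Cons
    by (metis list.sel(1))
  hence "e = e'" using Cons.prems w' by auto presburger+
  thus ?case using Cons.IH[of t "(a + e) mod 5"] Cons.prems h w' by auto
qed

lemma epath_surj: "successively C5E p \<Longrightarrow> p \<noteq> [] \<Longrightarrow>
   \<exists>w. set w \<subseteq> {1,2} \<and> length w = length p - 1 \<and> p = epath (hd p) w"
proof (induction p)
  case (Cons x p)
  show ?case
  proof (cases p)
    case Nil thus ?thesis by (intro exI[of _ "[]"]) simp
  next
    case (Cons y r)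
    have e: "C5E x y" and sp: "successively C5E p" using Cons.prems Cons by auto
    obtain w where w: "set w \<subseteq> {1,2}" "length w = length p - 1" "p = epath y w"
      using Cons.IH[OF sp] Cons by auto
    from e have "\<exists>d\<in>{1,2}. y = (x + d) mod 5" unfolding C5E_def by auto
    then obtain d where d: "d \<in> {1,2}" "y = (x + d) mod 5" by blast
    show ?thesis using w d Cons by (intro exI[of _ "d # w"]) (auto simp: epath_length)
  qed
qed simp

lemma Om_facts:
  fixes P :: "vpath \<Rightarrow> 'k::field"
  assumes n: "n \<ge> 2" and P: "P \<in> Omega_at n a"
  shows "\<And>p. P p \<noteq> 0 \<Longrightarrow> successively C5E p \<and> length p = Suc n \<and> hd p = a"
    and "\<And>q. bd C5V P q \<noteq> 0 \<Longrightarrow> successively C5E q"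
  using P n unfolding Omega_at_def Omega_def A_space_def allowed_iff by auto

lemma claims12:
  fixes P :: "vpath \<Rightarrow> 'k::field"
  assumes n: "n \<ge> 2" and a: "a < 5" and P: "P \<in> Omega_at n a"
  shows C1: "\<And>w j. w \<in> words n \<Longrightarrow> Suc j < n \<Longrightarrow> w ! j = 2 \<Longrightarrow> w ! Suc j = 2 \<Longrightarrow> P (epath a w) = 0"
    and C2: "\<And>w j. w \<in> words n \<Longrightarrow> Suc j < n \<Longrightarrow> w ! j = 1 \<Longrightarrow> w ! Suc j = 2 \<Longrightarrow>
       P (epath a w) + P (epath a (w[j := 2, Suc j := 1])) = 0"
proof -
  have PA: "\<And>p. P p \<noteq> 0 \<Longrightarrow> successively C5E p" using Om_facts(1)[OF n P] by blast
  have bdA: "\<And>q. bd C5V P q \<noteq> 0 \<Longrightarrow> successively C5E q" using Om_facts(2)[OF n P] by blast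
  fix w j assume w: "w \<in> words n" and j: "Suc j < n"
  define u where "u = take j w"
  define t where "t = drop (Suc (Suc j)) w"
  have lu: "length u = j" using w j unfolding u_def words_def by simp
  have ws: "w = u @ w ! j # w ! Suc j # t" unfolding u_def t_def
    by (rule split_word) (use w j in \<open>simp add: words_def\<close>)
  have sw: "set w \<subseteq> {1,2}" using w by (simp add: words_def)
  {
    assume "w ! j = 2" "w ! Suc j = 2"
    hence "w = u @ 2 # 2 # t" using ws by simp
    thus "P (epath a w) = 0" using part1[OF PA bdA a] sw by metis
  next
    assume "w ! j = 1" "w ! Suc j = 2"
    hence w1: "w = u @ 1 # 2 # t" using ws by simp
    hence "w[j := 2, Suc j := 1] = u @ 2 # 1 # t" using lu by (simp add: list_update_append)
    thus "P (epath a w) + P (epath a (w[j := 2, Suc j := 1])) = 0"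
      using part2[OF PA bdA a] sw w1 by metis
  }
qed

lemma words_upd: "w \<in> words n \<Longrightarrow> x \<in> {1,2} \<Longrightarrow> y \<in> {1,2} \<Longrightarrow> w[j := x, k := y] \<in> words n"
  unfolding words_def using set_update_subset_insert[of w j x] set_update_subset_insert[of "w[j:=x]" k y]
  by auto

lemma claim3:
  fixes P :: "vpath \<Rightarrow> 'k::field"
  assumes C1: "\<And>w j. w \<in> words n \<Longrightarrow> Suc j < n \<Longrightarrow> w ! j = 2 \<Longrightarrow> w ! Suc j = 2 \<Longrightarrow> P (epath a w) = 0"
    and C2: "\<And>w j. w \<in> words n \<Longrightarrow> Suc j < n \<Longrightarrow> w ! j = 1 \<Longrightarrow> w ! Suc j = 2 \<Longrightarrow>
       P (epath a w) + P (epath a (w[j := 2, Suc j := 1])) = 0"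
  shows "\<forall>w i. w \<in> words n \<and> i < k \<and> k < n \<and> w ! i = 2 \<and> w ! k = 2 \<longrightarrow> P (epath a w) = 0"
proof (induction k)
  case 0 thus ?case by simp
next
  case (Suc k)
  show ?case
  proof (intro allI impI)
    fix w i assume h: "w \<in> words n \<and> i < Suc k \<and> Suc k < n \<and> w ! i = 2 \<and> w ! Suc k = 2"
    hence w: "w \<in> words n" and i: "i < Suc k" and k: "Suc k < n" and wi: "w ! i = 2" and wk: "w ! Suc k = 2"
      by auto
    from words_nth[OF w, of k] k consider "w ! k = 2" | "w ! k = 1" by linarith
    then show "P (epath a w) = 0"
    proof cases
      case 1
      show ?thesis
      proof (cases "i = k")
        case True thus ?thesis using C1[OF w k 1 wk] by simp
      next
        case False
        hence "i < k" using i by simp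
        thus ?thesis using Suc.IH[rule_format, of w i] w k wi 1 by simp
      qed
    next
      case 2
      define w' where "w' = w[k := 2, Suc k := 1]"
      have ik: "i < k" using i 2 wi by (cases "i = k") auto
      have w'w: "w' \<in> words n" unfolding w'_def by (rule words_upd[OF w]) auto
      have "w' ! i = 2" "w' ! k = 2" using ik k wi w unfolding w'_def words_def by auto
      hence "P (epath a w') = 0" using Suc.IH w'w ik k by auto
      thus ?thesis using C2[OF w k 2 wk] unfolding w'_def by simp
    qed
  qed
qed

lemma claim4:
  fixes P :: "vpath \<Rightarrow> 'k::field"
  assumes C2: "\<And>w j. w \<in> words n \<Longrightarrow> Suc j < n \<Longrightarrow> w ! j = 1 \<Longrightarrow> w ! Suc j = 2 \<Longrightarrow>
       P (epath a w) + P (epath a (w[j := 2, Suc j := 1])) = 0"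
  shows "i < n \<Longrightarrow> P (epath a (uw n i)) = (-1) ^ i * P (epath a (uw n 0))"
proof (induction i)
  case 0 thus ?case by simp
next
  case (Suc i)
  have e: "(uw n (Suc i))[i := 2, Suc i := 1] = uw n i"
    using Suc.prems by (intro nth_equalityI) (auto simp: nth_list_update)
  have "P (epath a (uw n (Suc i))) + P (epath a (uw n i)) = 0"
    using C2[OF uw_words Suc.prems, of "Suc i"] Suc.prems e by simp
  thus ?case using Suc by (simp add: eq_neg_iff_add_eq_0)
qed

lemma claim3_main:
  fixes P :: "vpath \<Rightarrow> 'k::field"
  assumes n: "n \<ge> 2" and a: "a < 5" and P: "P \<in> Omega_at n a"
    and w: "w \<in> words n" and c: "count2 w \<ge> 2"
  shows "P (epath a w) = 0"
proof -
  note C1 = claims12(1)[OF n a P] and C2 = claims12(2)[OF n a P]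
  obtain i k where ik: "i < k" "k < n" "w ! i = 2" "w ! k = 2" using count2_two[OF w c] by blast
  have "\<forall>w i. w \<in> words n \<and> i < k \<and> k < n \<and> w ! i = 2 \<and> w ! k = 2 \<longrightarrow> P (epath a w) = 0"
    by (rule claim3) (fact C1, fact C2)
  thus ?thesis using ik w by blast
qed

lemma claim4_main:
  fixes P :: "vpath \<Rightarrow> 'k::field"
  assumes n: "n \<ge> 2" and a: "a < 5" and P: "P \<in> Omega_at n a"
    and w: "w \<in> words n" and i: "i < n" "count2 w = 1" "w ! i = 2"
  shows "P (epath a w) = (-1) ^ i * P (epath a (uw n 0))"
proof -
  note C2 = claims12(2)[OF n a P]
  obtain i' where i': "i' < n" "w = uw n i'" using count2_one[OF w i(2)] by blast
  have "i = i'" using i i' by (simp split: if_splits)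
  have "P (epath a (uw n i')) = (-1) ^ i' * P (epath a (uw n 0))"
    by (rule claim4) (fact C2, fact i'(1))
  thus ?thesis using i' \<open>i = i'\<close> by simp
qed

lemma count2_zero: "w \<in> words n \<Longrightarrow> count2 w = 0 \<Longrightarrow> w = replicate n 1"
proof -
  assume w: "w \<in> words n" and c: "count2 w = 0"
  have "\<forall>y\<in>set w. y = 1" using w c unfolding words_def count2_def by (auto simp: filter_empty_conv)
  from replicate_length_same[OF this] show ?thesis using w by (simp add: words_def)
qed

lemma words_set: "w \<in> words n \<Longrightarrow> set w \<subseteq> {1,2}" by (simp add: words_def)

lemma epath_words_inj: "w \<in> words n \<Longrightarrow> w' \<in> words m \<Longrightarrow> epath a w = epath a w' \<longleftrightarrow> w = w'"
  using epath_inj[OF words_set words_set] by blast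

lemma uw_inj: "i < n \<Longrightarrow> j < n \<Longrightarrow> uw n i = uw n j \<longleftrightarrow> i = j"
proof
  assume i: "i < n" "j < n" and e: "uw n i = uw n j"
  have "uw n i ! i = uw n j ! i" using e by simp
  thus "i = j" using i by (simp split: if_splits)
qed simp

theorem mainTheorem2:
  fixes P :: "vpath \<Rightarrow> 'k::field_char_0" and n a :: nat
  assumes "n \<ge> 2" and "a < 5" and "P \<in> Omega_at n a"
  shows "(\<forall>w\<in>words n. (\<exists>j. Suc j < n \<and> w ! j = 2 \<and> w ! Suc j = 2)
            \<longrightarrow> P (epath a w) = 0)
    \<and> (\<forall>w\<in>words n. \<forall>j. Suc j < n \<and> w ! j = 1 \<and> w ! Suc j = 2 \<longrightarrow>
            P (epath a w) + P (epath a (w[j := 2, Suc j := 1])) = 0)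
    \<and> (\<forall>w\<in>words n. count2 w \<ge> 2 \<longrightarrow> P (epath a w) = 0)
    \<and> (\<exists>c::'k. \<forall>w\<in>words n. \<forall>i<n. count2 w = 1 \<longrightarrow> w ! i = 2 \<longrightarrow>
            P (epath a w) = (-1) ^ i * c)
    \<and> (\<exists>b1 b2 :: vpath \<Rightarrow> 'k. \<forall>Q\<in>(Omega_at n a :: (vpath \<Rightarrow> 'k) set).
            \<exists>\<alpha> \<beta>. Q = (\<lambda>p. \<alpha> * b1 p + \<beta> * b2 p))"
proof (intro conjI)
  note n = assms(1) and a = assms(2) and P = assms(3)
  show "\<forall>w\<in>words n. (\<exists>j. Suc j < n \<and> w ! j = 2 \<and> w ! Suc j = 2) \<longrightarrow> P (epath a w) = 0"
  proof (intro ballI impI)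
    fix w assume w: "w \<in> words n" and "\<exists>j. Suc j < n \<and> w ! j = 2 \<and> w ! Suc j = 2"
    then obtain j where "Suc j < n" "w ! j = 2" "w ! Suc j = 2" by blast
    thus "P (epath a w) = 0" using claims12(1)[OF n a P w] by blast
  qed
  show "\<forall>w\<in>words n. \<forall>j. Suc j < n \<and> w ! j = 1 \<and> w ! Suc j = 2 \<longrightarrow>
            P (epath a w) + P (epath a (w[j := 2, Suc j := 1])) = 0"
  proof (intro ballI allI impI)
    fix w j assume w: "w \<in> words n" and h: "Suc j < n \<and> w ! j = 1 \<and> w ! Suc j = 2"
    thus "P (epath a w) + P (epath a (w[j := 2, Suc j := 1])) = 0"
      using claims12(2)[OF n a P w] by blast
  qed
  show "\<forall>w\<in>words n. count2 w \<ge> 2 \<longrightarrow> P (epath a w) = 0"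
  proof (intro ballI impI)
    fix w assume w: "w \<in> words n" and "count2 w \<ge> 2"
    thus "P (epath a w) = 0" by (rule claim3_main[OF n a P])
  qed
  show "\<exists>c::'k. \<forall>w\<in>words n. \<forall>i<n. count2 w = 1 \<longrightarrow> w ! i = 2 \<longrightarrow> P (epath a w) = (-1) ^ i * c"
  proof (intro exI ballI allI impI)
    fix w i assume w: "w \<in> words n" and "i < n" "count2 w = 1" "w ! i = 2"
    thus "P (epath a w) = (-1) ^ i * P (epath a (uw n 0))" by (rule claim4_main[OF n a P])
  qed
  define b1 :: "vpath \<Rightarrow> 'k" where "b1 p = (if p = epath a (replicate n 1) then 1 else 0)" for p
  define b2 :: "vpath \<Rightarrow> 'k" where "b2 p = (\<Sum>i<n. if p = epath a (uw n i) then (-1) ^ i else 0)" for p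
  have b1w: "b1 (epath a w) = (if count2 w = 0 then 1 else 0)" if w: "w \<in> words n" for w
  proof (cases "count2 w = 0")
    case True thus ?thesis using count2_zero[OF w] by (simp add: b1_def)
  next
    case False
    hence "w \<noteq> replicate n 1" using count2_rep by metis
    thus ?thesis using False epath_words_inj[OF w rep_words] by (simp add: b1_def)
  qed
  have b2w: "b2 (epath a w) = 0" if w: "w \<in> words n" "count2 w \<noteq> 1" for w
  proof -
    have "w \<noteq> uw n i" if "i < n" for i using count2_uw[OF that] w(2) by metis
    thus ?thesis unfolding b2_def using epath_words_inj[OF w(1) uw_words] by (intro sum.neutral) auto
  qed
  have b2u: "b2 (epath a (uw n i)) = (-1) ^ i" if i: "i < n" for i
  proof -
    have "b2 (epath a (uw n i)) = (\<Sum>j<n. if j = i then (-1) ^ j else 0)"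
      unfolding b2_def using epath_words_inj[OF uw_words uw_words] uw_inj i
      by (intro sum.cong) auto
    also have "\<dots> = (-1) ^ i" using i by (simp add: sum.delta')
    finally show ?thesis .
  qed
  have b1p: "b1 p = 0" "b2 p = 0" if np: "p \<notin> epath a ` words n" for p
  proof -
    show "b1 p = 0" using np rep_words unfolding b1_def by auto
    have "p \<noteq> epath a (uw n i)" for i using np uw_words by blast
    thus "b2 p = 0" unfolding b2_def by simp
  qed
  show "\<exists>b1 b2 :: vpath \<Rightarrow> 'k. \<forall>Q\<in>(Omega_at n a :: (vpath \<Rightarrow> 'k) set).
            \<exists>\<alpha> \<beta>. Q = (\<lambda>p. \<alpha> * b1 p + \<beta> * b2 p)"
  proof (rule exI[of _ b1], rule exI[of _ b2], rule ballI)
    fix Q :: "vpath \<Rightarrow> 'k" assume Q: "Q \<in> Omega_at n a"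
    show "\<exists>\<alpha> \<beta>. Q = (\<lambda>p. \<alpha> * b1 p + \<beta> * b2 p)"
    proof (rule exI[of _ "Q (epath a (replicate n 1))"], rule exI[of _ "Q (epath a (uw n 0))"], rule ext)
      fix p
      show "Q p = Q (epath a (replicate n 1)) * b1 p + Q (epath a (uw n 0)) * b2 p"
      proof (cases "p \<in> epath a ` words n")
        case False
        have "Q p = 0"
        proof (rule ccontr)
          assume "Q p \<noteq> 0"
          hence h: "successively C5E p \<and> length p = Suc n \<and> hd p = a" using Om_facts(1)[OF n Q] by blast
          then obtain w where "set w \<subseteq> {1,2}" "length w = length p - 1" "p = epath (hd p) w"
            using epath_surj[of p] by force
          hence "p \<in> epath a ` words n" using h unfolding words_def by auto
          thus False using False by simp
        qed
        thus ?thesis using b1p[OF False] by simp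
      next
        case True
        then obtain w where w: "w \<in> words n" and p: "p = epath a w" by blast
        consider "count2 w = 0" | "count2 w = 1" | "count2 w \<ge> 2" by linarith
        thus ?thesis
        proof cases
          case 1
          thus ?thesis using b1w[OF w] b2w[OF w] count2_zero[OF w] p by simp
        next
          case 2
          obtain i where i: "i < n" "w = uw n i" using count2_one[OF w 2] by blast
          have "Q p = (-1) ^ i * Q (epath a (uw n 0))"
            using claim4_main[OF n a Q w i(1) 2] i p by simp
          thus ?thesis using b1w[OF w] b2u[OF i(1)] p i 2 by simp
        next
          case 3
          thus ?thesis using b1w[OF w] b2w[OF w] claim3_main[OF n a Q w] p by simp
        qed
      qed
    qed
  qed
qed

end
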